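(* Let $G$ be a connected simple planar graph with $f_0$ vertices, $f_1$ edges and $f_2$ faces, and let $p(x)=f_2x^3+f_1x^2+f_0x+2$ be its Euler polynomial. Then all roots of $p(x)$ are real if and only if $(f_0+2)^2\ge 8(f_1+2)$, which is in turn equivalent to $(f_0-2)^2\ge 8f_2$.
   Context: All graphs are finite and simple (no loops, no parallel edges). For a connected planar graph, fix a planar embedding; $f_0,f_1,f_2$ denote the numbers of vertices, edges and faces (the unbounded face included), so that Euler's formula $f_0-f_1+f_2=2$ holds. *)

theory Defs
  imports Complex_Main "HOL-Computational_Algebra.Polynomial"
begin

definition simple_graph :: "'a set \<Rightarrow> 'a set set \<Rightarrow> bool" where
  "simple_graph V E \<longleftrightarrow> finite V \<and>
     (\<forall>e\<in>E. \<exists>u v. e = {u, v} \<and> u \<noteq> v \<and> u \<in> V \<and> v \<in> V)"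

definition adj_rel :: "'a set set \<Rightarrow> ('a \<times> 'a) set" where
  "adj_rel E = {(u, v). {u, v} \<in> E}"

definition connected_graph :: "'a set \<Rightarrow> 'a set set \<Rightarrow> bool" where
  "connected_graph V E \<longleftrightarrow> V \<noteq> {} \<and> (\<forall>u\<in>V. \<forall>v\<in>V. (u, v) \<in> (adj_rel E)\<^sup>*)"

definition neighbors :: "'a set set \<Rightarrow> 'a \<Rightarrow> 'a set" where
  "neighbors E v = {u. {v, u} \<in> E}"

definition darts :: "'a set set \<Rightarrow> ('a \<times> 'a) set" where
  "darts E = {(u, v). {u, v} \<in> E}"

text \<open>Combinatorial embedding (rotation system): for every vertex v, sigma v is
  a cyclic permutation of the neighbours of v (a single cycle).\<close>
definition rotation_system :: "'a set \<Rightarrow> 'a set set \<Rightarrow> ('a \<Rightarrow> 'a \<Rightarrow> 'a) \<Rightarrow> bool" where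
  "rotation_system V E \<sigma> \<longleftrightarrow>
     (\<forall>v\<in>V. bij_betw (\<sigma> v) (neighbors E v) (neighbors E v) \<and>
        (\<forall>u\<in>neighbors E v. neighbors E v = {(\<sigma> v ^^ k) u | k. True}))"

definition face_perm :: "('a \<Rightarrow> 'a \<Rightarrow> 'a) \<Rightarrow> 'a \<times> 'a \<Rightarrow> 'a \<times> 'a" where
  "face_perm \<sigma> d = (snd d, \<sigma> (snd d) (fst d))"

definition faces :: "'a set set \<Rightarrow> ('a \<Rightarrow> 'a \<Rightarrow> 'a) \<Rightarrow> ('a \<times> 'a) set set" where
  "faces E \<sigma> = {{(face_perm \<sigma> ^^ k) d | k. True} | d. d \<in> darts E}"

text \<open>Number of faces f2; a graph without edges (a single vertex, if connected)
  has exactly one face.\<close>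
definition num_faces :: "'a set set \<Rightarrow> ('a \<Rightarrow> 'a \<Rightarrow> 'a) \<Rightarrow> nat" where
  "num_faces E \<sigma> = (if E = {} then 1 else card (faces E \<sigma>))"

text \<open>A planar (spherical, genus 0) combinatorial embedding: a rotation system
  whose Euler characteristic V - E + F equals 2.\<close>
definition planar_embedding :: "'a set \<Rightarrow> 'a set set \<Rightarrow> ('a \<Rightarrow> 'a \<Rightarrow> 'a) \<Rightarrow> bool" where
  "planar_embedding V E \<sigma> \<longleftrightarrow> rotation_system V E \<sigma> \<and>
     int (card V) - int (card E) + int (num_faces E \<sigma>) = 2"

definition euler_poly :: "nat \<Rightarrow> nat \<Rightarrow> nat \<Rightarrow> complex poly" where
  "euler_poly f0 f1 f2 = [:2, of_nat f0, of_nat f1, of_nat f2:]"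

end

theory Submission
  imports Defs
begin

lemma quad_real_roots:
  fixes a b :: real
  assumes a: "a \<ge> 0"
  shows "(\<forall>z::complex. of_real a * z^2 + of_real b * z + 2 = 0 \<longrightarrow> z \<in> \<real>) \<longleftrightarrow> b^2 \<ge> 8*a"
proof
  assume H: "\<forall>z::complex. of_real a * z^2 + of_real b * z + 2 = 0 \<longrightarrow> z \<in> \<real>"
  show "b^2 \<ge> 8*a"
  proof (rule ccontr)
    assume "\<not> b^2 \<ge> 8*a"
    hence lt: "b^2 < 8*a" by simp
    hence apos: "a > 0" using a by (smt (verit) zero_le_power2)
    define y where "y = sqrt (8*a - b^2) / (2*a)"
    define z where "z = Complex (-b/(2*a)) y"
    have sq: "(sqrt (8*a - b^2))^2 = 8*a - b^2" using lt by simp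
    have ypos: "y > 0" unfolding y_def using lt apos by simp
    have y2: "y^2 = (8*a - b^2) / (4*a^2)" unfolding y_def using sq
      by (simp add: power_divide power_mult_distrib)
    have "of_real a * z^2 + of_real b * z + 2 = 0"
    proof (rule complex_eqI)
      show "Im (of_real a * z^2 + of_real b * z + 2) = Im 0"
        unfolding z_def using apos by (simp add: power2_eq_square field_simps)
      have "Re (of_real a * z^2 + of_real b * z + 2) = a * ((b/(2*a))^2 - y^2) - b*b/(2*a) + 2"
        unfolding z_def by (simp add: power2_eq_square algebra_simps)
      also have "\<dots> = 0" using apos unfolding y2 by (simp add: power2_eq_square field_simps)
      finally show "Re (of_real a * z^2 + of_real b * z + 2) = Re 0" by simp
    qed
    with H have "z \<in> \<real>" by blast
    hence "Im z = 0" by (simp add: complex_is_Real_iff)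
    thus False using ypos unfolding z_def by simp
  qed
next
  assume D: "b^2 \<ge> 8*a"
  show "\<forall>z::complex. of_real a * z^2 + of_real b * z + 2 = 0 \<longrightarrow> z \<in> \<real>"
  proof (intro allI impI)
    fix z :: complex
    assume R: "of_real a * z^2 + of_real b * z + 2 = 0"
    define x where "x = Re z"
    define y where "y = Im z"
    have im: "2*a*x*y + b*y = 0"
      using arg_cong[OF R, of Im] unfolding x_def y_def by (simp add: power2_eq_square algebra_simps)
    have re: "a*(x^2 - y^2) + b*x + 2 = 0"
      using arg_cong[OF R, of Re] unfolding x_def y_def by (simp add: power2_eq_square algebra_simps)
    show "z \<in> \<real>"
    proof (rule ccontr)
      assume "z \<notin> \<real>"
      hence yne: "y \<noteq> 0" unfolding y_def by (simp add: complex_is_Real_iff)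
      hence xe: "2*a*x + b = 0" using im by (metis mult_eq_0_iff distrib_right)
      have "a > 0"
      proof (rule ccontr)
        assume "\<not> a > 0" hence "a = 0" using a by simp
        hence "b = 0" using xe by simp
        thus False using re \<open>a = 0\<close> by simp
      qed
      have "4*a*(a*(x^2 - y^2) + b*x + 2) = (2*a*x+b)^2 - b^2 + 8*a - 4*a^2*y^2"
        by (simp add: power2_eq_square algebra_simps)
      hence "0 = -(b^2) + 8*a - 4*a^2*y^2" using re xe by simp
      moreover have "a^2*y^2 > 0" using \<open>a > 0\<close> yne by simp
      ultimately show False using D by linarith
    qed
  qed
qed

theorem mainTheorem1:
  fixes V :: "'a set" and E :: "'a set set" and \<sigma> :: "'a \<Rightarrow> 'a \<Rightarrow> 'a"
  assumes "simple_graph V E" and "connected_graph V E" and "planar_embedding V E \<sigma>"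
  shows "((\<forall>z. poly (euler_poly (card V) (card E) (num_faces E \<sigma>)) z = 0 \<longrightarrow> z \<in> \<real>)
            \<longleftrightarrow> (int (card V) + 2)^2 \<ge> 8 * (int (card E) + 2))
       \<and> ((int (card V) + 2)^2 \<ge> 8 * (int (card E) + 2)
            \<longleftrightarrow> (int (card V) - 2)^2 \<ge> 8 * int (num_faces E \<sigma>))"
proof -
  define f0 where "f0 = card V"
  define f1 where "f1 = card E"
  define f2 where "f2 = num_faces E \<sigma>"
  have eul: "int f0 - int f1 + int f2 = 2"
    using assms(3) unfolding planar_embedding_def f0_def f1_def f2_def by simp
  have eq2: "(int f0 + 2)^2 \<ge> 8 * (int f1 + 2) \<longleftrightarrow> (int f0 - 2)^2 \<ge> 8 * int f2"
  proof -
    have "(int f0 + 2)^2 - 8 * (int f1 + 2) = (int f0 - 2)^2 - 8 * int f2"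
      using eul by (simp add: power2_eq_square algebra_simps)
    thus ?thesis by linarith
  qed
  define a :: real where "a = real f2"
  define b :: real where "b = real f0 - 2"
  have f1r: "real f1 = a + b" unfolding a_def b_def using eul by linarith
  have fac: "poly (euler_poly f0 f1 f2) z = (z + 1) * (of_real a * z^2 + of_real b * z + 2)" for z
  proof -
    have c1: "(of_nat f1 :: complex) = of_real a + of_real b"
      using arg_cong[OF f1r, of complex_of_real] by simp
    have c0: "(of_nat f0 :: complex) = of_real b + 2" unfolding b_def by simp
    have c2: "(of_nat f2 :: complex) = of_real a" unfolding a_def by simp
    show ?thesis unfolding euler_poly_def using c0 c1 c2
      by (simp add: power2_eq_square algebra_simps)
  qed
  have eqr: "(\<forall>z. poly (euler_poly f0 f1 f2) z = 0 \<longrightarrow> z \<in> \<real>) \<longleftrightarrow>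
        (\<forall>z::complex. of_real a * z^2 + of_real b * z + 2 = 0 \<longrightarrow> z \<in> \<real>)"
  proof -
    have "(-1::complex) \<in> \<real>" by simp
    then show ?thesis unfolding fac
      by (metis add_eq_0_iff2 mult_eq_0_iff)
  qed
  have q: "(\<forall>z::complex. of_real a * z^2 + of_real b * z + 2 = 0 \<longrightarrow> z \<in> \<real>) \<longleftrightarrow> b^2 \<ge> 8*a"
    by (rule quad_real_roots) (simp add: a_def)
  have "b^2 \<ge> 8*a \<longleftrightarrow> (int f0 - 2)^2 \<ge> 8 * int f2"
  proof -
    have "b^2 = real_of_int ((int f0 - 2)^2)" unfolding b_def by simp
    moreover have "8*a = real_of_int (8 * int f2)" unfolding a_def by simp
    ultimately show ?thesis by (metis of_int_le_iff)
  qed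
  with eqr q eq2 show ?thesis unfolding f0_def f1_def f2_def by blast
qed

end
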